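(* Let $P,Q$ be probability distributions on $\mathbb R^d$, absolutely continuous with respect to Lebesgue measure, with finite second moments and $L$-Lipschitz continuous densities $p,q$. Let $\epsilon>0$ and $\lambda>\epsilon$. If $\mathcal W_2(p,q)<\epsilon^2$, then for every $x\in\mathbb R^d$ $$p_\lambda(x)\le\frac{vol_d(\lambda)}{vol_d(\lambda-\epsilon)}q_\lambda(x)+\Big(\frac{vol_d(\lambda)}{vol_d(\lambda-\epsilon)}-1\Big)2\lambda L+\frac{\epsilon}{vol_d(\lambda-\epsilon)}.$$
   Context: $\mathcal W_2$ is the 2-Wasserstein distance. $B^d_\lambda(x)$ denotes the Euclidean ball in $\mathbb R^d$ of radius $\lambda$ centered at $x$, $vol_d(\lambda)$ its volume, and for a density $p$, $p_\lambda(x)=\frac1{vol_d(\lambda)}\int_{B^d_\lambda(0)}p(x+z)\,dz$ (similarly $q_\lambda$). *)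

theory Defs
  imports "HOL-Probability.Probability"
begin

definition couplings :: "'a::euclidean_space measure \<Rightarrow> 'a measure \<Rightarrow> ('a \<times> 'a) measure set" where
  "couplings \<mu> \<nu> = {\<pi>. prob_space \<pi> \<and> sets \<pi> = sets (borel \<Otimes>\<^sub>M borel) \<and>
      distr \<pi> lborel fst = \<mu> \<and> distr \<pi> lborel snd = \<nu>}"

definition W2 :: "'a::euclidean_space measure \<Rightarrow> 'a measure \<Rightarrow> real" where
  "W2 \<mu> \<nu> = sqrt (enn2real (INF \<pi>\<in>couplings \<mu> \<nu>.
       \<integral>\<^sup>+ z. ennreal ((norm (fst z - snd z))\<^sup>2) \<partial>\<pi>))"

definition vol_ball :: "'a::euclidean_space itself \<Rightarrow> real \<Rightarrow> real" where
  "vol_ball _ r = measure lborel (ball (0::'a) r)"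

definition smooth_dens :: "real \<Rightarrow> ('a::euclidean_space \<Rightarrow> real) \<Rightarrow> 'a \<Rightarrow> real" where
  "smooth_dens r p x = (1 / vol_ball TYPE('a) r) * (LINT z : ball 0 r | lborel. p (x + z))"

end

theory Submission
  imports Defs
begin


lemma distr_pair_snd':
  assumes "prob_space M1" "prob_space M2"
  shows "distr (M1 \<Otimes>\<^sub>M M2) M2 snd = M2"
proof (intro measure_eqI)
  interpret M1: prob_space M1 by fact
  interpret M2: prob_space M2 by fact
  interpret pair_prob_space M1 M2 ..
  fix A assume A: "A \<in> sets (distr (M1 \<Otimes>\<^sub>M M2) M2 snd)"
  from A have "emeasure (distr (M1 \<Otimes>\<^sub>M M2) M2 snd) A = emeasure (M1 \<Otimes>\<^sub>M M2) (space M1 \<times> A)"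
    by (auto simp add: emeasure_distr space_pair_measure dest: sets.sets_into_space intro!: arg_cong2[where f=emeasure])
  with A assms show "emeasure (distr (M1 \<Otimes>\<^sub>M M2) M2 snd) A = emeasure M2 A"
  proof -
    have "emeasure (M1 \<Otimes>\<^sub>M M2) (space M1 \<times> A) = emeasure M1 (space M1) * emeasure M2 A"
      using A by (intro M2.emeasure_pair_measure_Times) auto
    then show ?thesis using M1.emeasure_space_1 \<open>emeasure (distr (M1 \<Otimes>\<^sub>M M2) M2 snd) A = _\<close> by simp
  qed
qed simp

lemma prob_density:
  fixes p :: "'a::euclidean_space \<Rightarrow> real"
  assumes "p \<in> borel_measurable borel" "\<And>y. p y \<ge> 0" "integrable lborel p" "(\<integral>y. p y \<partial>lborel) = 1"
  shows "prob_space (density lborel p)"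
proof (rule prob_spaceI)
  have "emeasure (density lborel p) (space (density lborel p)) = (\<integral>\<^sup>+ y. ennreal (p y) \<partial>lborel)"
    using assms by (simp add: emeasure_density)
  also have "\<dots> = ennreal (\<integral>y. p y \<partial>lborel)"
    using assms by (intro nn_integral_eq_integral) auto
  finally show "emeasure (density lborel p) (space (density lborel p)) = 1" using assms by simp
qed

lemma density_measure_eq:
  fixes p :: "'a::euclidean_space \<Rightarrow> real"
  assumes [measurable]: "p \<in> borel_measurable borel" and "\<And>y. p y \<ge> 0" "integrable lborel p"
    and [measurable]: "B \<in> sets borel"
  shows "measure (density lborel p) B = (\<integral>y. indicator B y * p y \<partial>lborel)"
proof -
  have "emeasure (density lborel p) B = (\<integral>\<^sup>+ y. ennreal (indicator B y * p y) \<partial>lborel)"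
    using assms by (subst emeasure_density) (auto intro!: nn_integral_cong simp: indicator_def)
  also have "\<dots> = ennreal (\<integral>y. indicator B y * p y \<partial>lborel)"
    using assms integrable_mult_indicator[of B lborel p] by (intro nn_integral_eq_integral) auto
  finally show ?thesis using assms
    by (simp add: measure_def integral_nonneg_AE)
qed

lemma translate_int:
  fixes p :: "'a::euclidean_space \<Rightarrow> real"
  assumes [measurable]: "p \<in> borel_measurable borel"
  shows "(\<integral>y. indicator (ball x r) y * p y \<partial>lborel) = (\<integral>z. indicator (ball 0 r) z * p (x + z) \<partial>lborel)"
proof -
  have [measurable]: "ball x r \<in> sets borel" by simp
  have "(\<integral>y. indicator (ball x r) y * p y \<partial>lborel) = (\<integral>y. indicator (ball x r) y * p y \<partial>(distr lborel borel ((+) x)))"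
    by (simp add: lborel_distr_plus)
  also have "\<dots> = (\<integral>z. indicator (ball x r) (x + z) * p (x + z) \<partial>lborel)"
    by (subst integral_distr) auto
  also have "\<dots> = (\<integral>z. indicator (ball 0 r) z * p (x + z) \<partial>lborel)"
    by (intro Bochner_Integration.integral_cong refl) (auto simp: indicator_def dist_norm)
  finally show ?thesis .
qed



lemma ind_const:
  fixes c :: real
  assumes "A \<in> sets borel" "emeasure lborel A < \<infinity>"
  shows "integrable lborel (\<lambda>z::'a::euclidean_space. indicator A z * c)"
    and "(\<integral>z. indicator A z * c \<partial>lborel) = measure lborel A * c"
  using assms by auto

lemma analytic:
  fixes f :: "'a::euclidean_space \<Rightarrow> real"
  assumes [measurable]: "f \<in> borel_measurable borel" and fi: "integrable lborel f"
    and lip: "\<And>z. \<bar>f z - f 0\<bar> \<le> L * norm z" and L: "L \<ge> 0" and r: "0 < r'" "r' \<le> r"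
  shows "vol_ball TYPE('a) r' * (\<integral>z. indicator (ball 0 r) z * f z \<partial>lborel)
     \<le> vol_ball TYPE('a) r * (\<integral>z. indicator (ball 0 r') z * f z \<partial>lborel)
       + vol_ball TYPE('a) r * (vol_ball TYPE('a) r - vol_ball TYPE('a) r') * (2 * r * L)"
proof -
  define V where "V = vol_ball TYPE('a) r"
  define V' where "V' = vol_ball TYPE('a) r'"
  define c where "c = f 0"
  define Ann where "Ann = ball (0::'a) r - ball 0 r'"
  have sub: "ball (0::'a) r' \<subseteq> ball 0 r" using r by auto
  have [measurable]: "Ann \<in> sets borel" unfolding Ann_def by simp
  have finA: "emeasure lborel Ann < \<infinity>"
    unfolding Ann_def using emeasure_lborel_ball_finite[of "0::'a" r]
    by (metis Diff_subset emeasure_mono order.strict_trans1 sets_lborel borel_open open_ball)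
  have mA: "measure lborel Ann = V - V'"
    unfolding Ann_def V_def V'_def vol_ball_def using sub emeasure_lborel_ball_finite[of "0::'a" r]
    by (intro measure_Diff) auto
  have V'pos: "V' > 0" unfolding V'_def vol_ball_def using r by simp
  have VV': "V' \<le> V" unfolding V'_def V_def vol_ball_def using sub emeasure_lborel_ball_finite[of "0::'a" r]
    by (intro measure_mono_fmeasurable) (auto simp: fmeasurable_def)
  have int1: "integrable lborel (\<lambda>z. indicator S z * f z)" if "S \<in> sets borel" for S :: "'a set"
    using integrable_mult_indicator[OF _ fi, of S] that by simp
  have split: "(\<integral>z. indicator (ball 0 r) z * f z \<partial>lborel) =
     (\<integral>z. indicator (ball 0 r') z * f z \<partial>lborel) + (\<integral>z. indicator Ann z * f z \<partial>lborel)"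
  proof -
    have "(\<integral>z. indicator (ball 0 r) z * f z \<partial>lborel) =
      (\<integral>z. indicator (ball 0 r') z * f z + indicator Ann z * f z \<partial>lborel)"
      using sub by (intro Bochner_Integration.integral_cong refl) (auto simp: Ann_def indicator_def)
    also have "\<dots> = (\<integral>z. indicator (ball 0 r') z * f z \<partial>lborel) + (\<integral>z. indicator Ann z * f z \<partial>lborel)"
      by (intro Bochner_Integration.integral_add int1) auto
    finally show ?thesis .
  qed
  have D: "(\<integral>z. indicator Ann z * f z \<partial>lborel) \<le> (V - V') * (c + L * r)"
  proof -
    have "(\<integral>z. indicator Ann z * f z \<partial>lborel) \<le> (\<integral>z. indicator Ann z * (c + L * r) \<partial>lborel)"
    proof (intro integral_mono int1 ind_const(1) finA)
      fix z
      show "indicator Ann z * f z \<le> indicator Ann z * (c + L * r)"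
      proof (cases "z \<in> Ann")
        case True
        then have "norm z < r" by (auto simp: Ann_def)
        then have "L * norm z \<le> L * r" using L by (intro mult_left_mono) auto
        then show ?thesis using True lip[of z] by (auto simp: c_def)
      qed auto
    qed auto
    also have "\<dots> = (V - V') * (c + L * r)" using finA mA by (subst ind_const(2)) auto
    finally show ?thesis .
  qed
  have I': "(\<integral>z. indicator (ball 0 r') z * f z \<partial>lborel) \<ge> V' * (c - L * r)"
  proof -
    have "(\<integral>z. indicator (ball 0 r') z * f z \<partial>lborel) \<ge> (\<integral>z. indicator (ball (0::'a) r') z * (c - L * r) \<partial>lborel)"
    proof (rule integral_mono)
      show "integrable lborel (\<lambda>z. indicator (ball (0::'a) r') z * (c - L * r))"
        using emeasure_lborel_ball_finite[of "0::'a" r'] by (intro ind_const(1)) auto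
      show "integrable lborel (\<lambda>z. indicator (ball (0::'a) r') z * f z)" by (intro int1) auto
    next
      fix z :: 'a
      show "indicator (ball 0 r') z * (c - L * r) \<le> indicator (ball 0 r') z * f z"
      proof (cases "z \<in> ball 0 r'")
        case True
        then have "norm z < r" using r by auto
        then have "L * norm z \<le> L * r" using L by (intro mult_left_mono) auto
        then show ?thesis using True lip[of z] by (auto simp: c_def)
      qed auto
    qed
    also have "(\<integral>z. indicator (ball (0::'a) r') z * (c - L * r) \<partial>lborel) = V' * (c - L * r)"
      using emeasure_lborel_ball_finite[of "0::'a" r']
      by (subst ind_const(2)) (auto simp: V'_def vol_ball_def)
    finally show ?thesis .
  qed
  define I' where "I' = (\<integral>z. indicator (ball 0 r') z * f z \<partial>lborel)"
  define D' where "D' = (\<integral>z. indicator Ann z * f z \<partial>lborel)"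
  have "V' * D' \<le> V' * ((V - V') * (c + L * r))"
    using D V'pos unfolding D'_def by (intro mult_left_mono) auto
  also have "\<dots> = (V - V') * (V' * (c - L * r)) + (V - V') * V' * (2 * r * L)"
    by (simp add: algebra_simps)
  also have "\<dots> \<le> (V - V') * I' + (V - V') * V * (2 * r * L)"
  proof (intro add_mono mult_left_mono mult_right_mono)
    show "V' * (c - L * r) \<le> I'" using I' unfolding I'_def by simp
  qed (use VV' L r in auto)
  finally have key: "V' * D' \<le> (V - V') * I' + (V - V') * V * (2 * r * L)" .
  have "V' * (I' + D') \<le> V * I' + V * (V - V') * (2 * r * L)"
    using key by (simp add: algebra_simps)
  then show ?thesis using split unfolding I'_def D'_def V_def V'_def by simp
qed



lemma mom_fin:
  fixes p :: "'a::euclidean_space \<Rightarrow> real"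
  assumes [measurable]: "p \<in> borel_measurable borel" and "\<And>y. p y \<ge> 0"
    and mom: "integrable lborel (\<lambda>y. (norm y)\<^sup>2 * p y)"
  shows "(\<integral>\<^sup>+ y. ennreal (2 * (norm y)\<^sup>2) \<partial>density lborel p) < \<infinity>"
proof -
  have "(\<integral>\<^sup>+ y. ennreal (2 * (norm y)\<^sup>2) \<partial>density lborel p) = (\<integral>\<^sup>+ y. ennreal (p y) * ennreal (2 * (norm y)\<^sup>2) \<partial>lborel)"
    using assms by (subst nn_integral_density) auto
  also have "\<dots> = (\<integral>\<^sup>+ y. 2 * ennreal (norm ((norm y)\<^sup>2 * p y)) \<partial>lborel)"
  proof (intro nn_integral_cong)
    fix y :: 'a
    have "ennreal (p y) * ennreal (2 * (norm y)\<^sup>2) = ennreal (2 * ((norm y)\<^sup>2 * p y))"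
      using assms by (subst ennreal_mult[symmetric]) (auto simp: mult_ac)
    also have "\<dots> = ennreal 2 * ennreal ((norm y)\<^sup>2 * p y)"
      using assms by (subst ennreal_mult) auto
    finally show "ennreal (p y) * ennreal (2 * (norm y)\<^sup>2) = 2 * ennreal (norm ((norm y)\<^sup>2 * p y))"
      using assms by (simp add: abs_mult)
  qed
  also have "\<dots> = 2 * (\<integral>\<^sup>+ y. ennreal (norm ((norm y)\<^sup>2 * p y)) \<partial>lborel)"
    by (subst nn_integral_cmult) auto
  also have "\<dots> < \<infinity>" using integrableD(2)[OF mom] assms(2) by (simp add: ennreal_mult_less_top less_top abs_mult)
  finally show ?thesis .
qed

lemma couplings_measurable:
  "\<pi> \<in> couplings M N \<Longrightarrow> measurable \<pi> K = measurable (borel \<Otimes>\<^sub>M borel) K"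
  by (rule measurable_cong_sets) (auto simp: couplings_def)

lemma cost_fin:
  fixes p q :: "'a::euclidean_space \<Rightarrow> real"
  assumes [measurable]: "p \<in> borel_measurable borel" "q \<in> borel_measurable borel"
    and "\<And>y. p y \<ge> 0" "\<And>y. q y \<ge> 0"
    and "integrable lborel (\<lambda>y. (norm y)\<^sup>2 * p y)" "integrable lborel (\<lambda>y. (norm y)\<^sup>2 * q y)"
    and pi: "\<pi> \<in> couplings (density lborel p) (density lborel q)"
  shows "(\<integral>\<^sup>+ z. ennreal ((norm (fst z - snd z))\<^sup>2) \<partial>\<pi>) < \<infinity>"
proof -
  have s\<pi>: "sets \<pi> = sets (borel \<Otimes>\<^sub>M borel)" and d1: "distr \<pi> lborel fst = density lborel p"
    and d2: "distr \<pi> lborel snd = density lborel q"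
    using pi by (auto simp: couplings_def)
  note mc = couplings_measurable[OF pi]
  have [measurable]: "fst \<in> measurable \<pi> lborel" "snd \<in> measurable \<pi> lborel"
     "fst \<in> borel_measurable \<pi>" "snd \<in> borel_measurable \<pi>"
    by (unfold mc; measurable)+
  have "(\<integral>\<^sup>+ z. ennreal ((norm (fst z - snd z))\<^sup>2) \<partial>\<pi>)
      \<le> (\<integral>\<^sup>+ z. ennreal (2 * (norm (fst z))\<^sup>2) + ennreal (2 * (norm (snd z))\<^sup>2) \<partial>\<pi>)"
  proof (intro nn_integral_mono)
    fix z :: "'a \<times> 'a"
    have "norm (fst z - snd z) \<le> norm (fst z) + norm (snd z)" by (rule norm_triangle_ineq4)
    then have "(norm (fst z - snd z))\<^sup>2 \<le> (norm (fst z) + norm (snd z))\<^sup>2"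
      by (intro power_mono) auto
    also have "\<dots> \<le> 2 * (norm (fst z))\<^sup>2 + 2 * (norm (snd z))\<^sup>2"
    proof -
      have "(norm (fst z) + norm (snd z))\<^sup>2 + (norm (fst z) - norm (snd z))\<^sup>2 = 2 * (norm (fst z))\<^sup>2 + 2 * (norm (snd z))\<^sup>2"
        by (simp add: power2_eq_square algebra_simps)
      moreover have "0 \<le> (norm (fst z) - norm (snd z))\<^sup>2" by simp
      ultimately show ?thesis by linarith
    qed
    finally show "ennreal ((norm (fst z - snd z))\<^sup>2) \<le> ennreal (2 * (norm (fst z))\<^sup>2) + ennreal (2 * (norm (snd z))\<^sup>2)"
      by (simp add: ennreal_plus[symmetric] del: ennreal_plus)
  qed
  also have "\<dots> = (\<integral>\<^sup>+ z. ennreal (2 * (norm (fst z))\<^sup>2) \<partial>\<pi>) + (\<integral>\<^sup>+ z. ennreal (2 * (norm (snd z))\<^sup>2) \<partial>\<pi>)"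
    by (intro nn_integral_add) (unfold mc; measurable)+
  also have "(\<integral>\<^sup>+ z. ennreal (2 * (norm (fst z))\<^sup>2) \<partial>\<pi>) = (\<integral>\<^sup>+ y. ennreal (2 * (norm y)\<^sup>2) \<partial>distr \<pi> lborel fst)"
    by (subst nn_integral_distr) auto
  also have "(\<integral>\<^sup>+ z. ennreal (2 * (norm (snd z))\<^sup>2) \<partial>\<pi>) = (\<integral>\<^sup>+ y. ennreal (2 * (norm y)\<^sup>2) \<partial>distr \<pi> lborel snd)"
    by (subst nn_integral_distr) auto
  also have "(\<integral>\<^sup>+ y. ennreal (2 * (norm y)\<^sup>2) \<partial>distr \<pi> lborel fst) + (\<integral>\<^sup>+ y. ennreal (2 * (norm y)\<^sup>2) \<partial>distr \<pi> lborel snd) < \<infinity>"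
    unfolding d1 d2 using mom_fin[of p] mom_fin[of q] assms by simp
  finally show ?thesis .
qed



lemma product_coupling:
  fixes p q :: "'a::euclidean_space \<Rightarrow> real"
  assumes "prob_space (density lborel p)" "prob_space (density lborel q)"
  shows "density lborel p \<Otimes>\<^sub>M density lborel q \<in> couplings (density lborel p) (density lborel q)"
proof -
  let ?M1 = "density lborel p" and ?M2 = "density lborel q"
  have "distr (?M1 \<Otimes>\<^sub>M ?M2) lborel fst = distr (?M1 \<Otimes>\<^sub>M ?M2) ?M1 fst"
    by (rule distr_cong) auto
  also have "\<dots> = ?M1" using assms(2) by (rule prob_space.distr_pair_fst)
  finally have 1: "distr (?M1 \<Otimes>\<^sub>M ?M2) lborel fst = ?M1" .
  have "distr (?M1 \<Otimes>\<^sub>M ?M2) lborel snd = distr (?M1 \<Otimes>\<^sub>M ?M2) ?M2 snd"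
    by (rule distr_cong) auto
  also have "\<dots> = ?M2" using assms by (intro distr_pair_snd')
  finally have 2: "distr (?M1 \<Otimes>\<^sub>M ?M2) lborel snd = ?M2" .
  have 3: "sets (?M1 \<Otimes>\<^sub>M ?M2) = sets (borel \<Otimes>\<^sub>M borel)"
    by (intro sets_pair_measure_cong) auto
  show ?thesis using 1 2 3 prob_space_pair[OF assms] by (simp add: couplings_def)
qed

lemma coupling_bound:
  fixes p q :: "'a::euclidean_space \<Rightarrow> real" and \<epsilon> :: real
  assumes [measurable]: "p \<in> borel_measurable borel" "q \<in> borel_measurable borel"
    and "\<And>y. p y \<ge> 0" "\<And>y. q y \<ge> 0"
    and "integrable lborel p" "integrable lborel q"
    and "(\<integral>y. p y \<partial>lborel) = 1" "(\<integral>y. q y \<partial>lborel) = 1"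
    and "integrable lborel (\<lambda>y. (norm y)\<^sup>2 * p y)" "integrable lborel (\<lambda>y. (norm y)\<^sup>2 * q y)"
    and eps: "\<epsilon> > 0"
    and W: "W2 (density lborel p) (density lborel q) < \<epsilon>\<^sup>2"
    and B[measurable]: "B1 \<in> sets borel" "B2 \<in> sets borel"
    and BB: "\<And>y z. y \<in> B1 \<Longrightarrow> norm (y - z) < \<epsilon> \<Longrightarrow> z \<in> B2"
  shows "measure (density lborel p) B1 \<le> measure (density lborel q) B2 + \<epsilon>"
proof -
  let ?M1 = "density lborel p" and ?M2 = "density lborel q"
  let ?C = "\<lambda>\<pi>. \<integral>\<^sup>+ z. ennreal ((norm (fst z - snd z))\<^sup>2) \<partial>\<pi>"
  define I where "I = (INF \<pi>\<in>couplings ?M1 ?M2. ?C \<pi>)"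
  have P1: "prob_space ?M1" using assms by (intro prob_density) auto
  have P2: "prob_space ?M2" using assms by (intro prob_density) auto
  have "I \<le> ?C (?M1 \<Otimes>\<^sub>M ?M2)" unfolding I_def
    using product_coupling[OF P1 P2] by (rule INF_lower)
  also have "\<dots> < \<infinity>" using assms product_coupling[OF P1 P2] by (intro cost_fin) auto
  finally have Ifin: "I < \<infinity>" .
  have "sqrt (enn2real I) < \<epsilon>\<^sup>2" using W unfolding W2_def I_def by simp
  then have "(sqrt (enn2real I))\<^sup>2 < (\<epsilon>\<^sup>2)\<^sup>2" by (intro power_strict_mono) auto
  then have "enn2real I < \<epsilon> ^ 4" by simp
  have "I = ennreal (enn2real I)" using Ifin by (simp add: less_top)
  also have "\<dots> < ennreal (\<epsilon> ^ 4)" using \<open>enn2real I < \<epsilon> ^ 4\<close> by (simp add: ennreal_less_iff)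
  finally have "I < ennreal (\<epsilon> ^ 4)" .
  then obtain \<pi> where pi: "\<pi> \<in> couplings ?M1 ?M2" and Cpi: "?C \<pi> < ennreal (\<epsilon> ^ 4)"
    unfolding I_def by (auto simp: INF_less_iff)
  interpret prob_space \<pi> using pi by (auto simp: couplings_def)
  note mc = couplings_measurable[OF pi]
  have d1: "distr \<pi> lborel fst = ?M1" and d2: "distr \<pi> lborel snd = ?M2"
    using pi by (auto simp: couplings_def)
  have [measurable]: "fst \<in> measurable \<pi> lborel" "snd \<in> measurable \<pi> lborel"
     "fst \<in> borel_measurable \<pi>" "snd \<in> borel_measurable \<pi>"
    by (unfold mc; measurable)+
  define E where "E = {z \<in> space \<pi>. \<epsilon> \<le> norm (fst z - snd z)}"
  have E[measurable]: "E \<in> sets \<pi>" unfolding E_def by measurable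
  have "ennreal (\<epsilon>\<^sup>2) * emeasure \<pi> E = (\<integral>\<^sup>+ z. ennreal (\<epsilon>\<^sup>2) * indicator E z \<partial>\<pi>)"
    using E by (simp add: nn_integral_cmult_indicator)
  also have "\<dots> \<le> ?C \<pi>"
  proof (intro nn_integral_mono)
    fix z
    show "ennreal (\<epsilon>\<^sup>2) * indicator E z \<le> ennreal ((norm (fst z - snd z))\<^sup>2)"
    proof (cases "z \<in> E")
      case True
      then have "\<epsilon>\<^sup>2 \<le> (norm (fst z - snd z))\<^sup>2" using eps by (intro power_mono) (auto simp: E_def)
      then show ?thesis using True by auto
    qed auto
  qed
  also note Cpi
  finally have "ennreal (\<epsilon>\<^sup>2 * measure \<pi> E) < ennreal (\<epsilon> ^ 4)"
    by (simp add: emeasure_eq_measure ennreal_mult'')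
  then have "\<epsilon>\<^sup>2 * measure \<pi> E < \<epsilon> ^ 4"
    by (subst (asm) ennreal_less_iff) auto
  moreover have "(\<epsilon>::real) ^ 4 = \<epsilon>\<^sup>2 * \<epsilon>\<^sup>2" by (simp add: power2_eq_square power4_eq_xxxx)
  ultimately have "\<epsilon>\<^sup>2 * measure \<pi> E < \<epsilon>\<^sup>2 * \<epsilon>\<^sup>2" by linarith
  then have mE2: "measure \<pi> E < \<epsilon>\<^sup>2" using eps mult_less_cancel_left_pos[of "\<epsilon>\<^sup>2" "measure \<pi> E" "\<epsilon>\<^sup>2"] by auto
  have mE: "measure \<pi> E \<le> \<epsilon>"
  proof (cases "\<epsilon> \<le> 1")
    case True
    then have "\<epsilon>\<^sup>2 \<le> \<epsilon>" using eps by (simp add: power2_eq_square mult_left_le)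
    then show ?thesis using mE2 by linarith
  next
    case False
    then show ?thesis using prob_le_1[of E] by linarith
  qed
  define A1 where "A1 = fst -` B1 \<inter> space \<pi>"
  define A2 where "A2 = snd -` B2 \<inter> space \<pi>"
  have [measurable]: "A1 \<in> sets \<pi>" "A2 \<in> sets \<pi>" unfolding A1_def A2_def by measurable
  have m1: "measure ?M1 B1 = measure \<pi> A1"
    unfolding A1_def d1[symmetric] by (subst measure_distr) auto
  have m2: "measure ?M2 B2 = measure \<pi> A2"
    unfolding A2_def d2[symmetric] by (subst measure_distr) auto
  have "A1 \<subseteq> A2 \<union> E"
  proof
    fix z assume z: "z \<in> A1"
    show "z \<in> A2 \<union> E"
    proof (cases "\<epsilon> \<le> norm (fst z - snd z)")
      case True then show ?thesis using z by (simp add: A1_def E_def)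
    next
      case False
      then have "snd z \<in> B2" using z BB[of "fst z" "snd z"] by (simp add: A1_def)
      then show ?thesis using z by (simp add: A1_def A2_def)
    qed
  qed
  then have "measure \<pi> A1 \<le> measure \<pi> (A2 \<union> E)" by (intro finite_measure_mono) auto
  also have "\<dots> \<le> measure \<pi> A2 + measure \<pi> E" by (intro measure_Un_le) auto
  finally show ?thesis using m1 m2 mE by linarith
qed



lemma shift_facts:
  fixes p :: "'a::euclidean_space \<Rightarrow> real"
  assumes [measurable]: "p \<in> borel_measurable borel" and pi: "integrable lborel p" and "\<And>y. p y \<ge> 0"
  shows "(\<lambda>z. p (x + z)) \<in> borel_measurable borel"
    and "integrable lborel (\<lambda>z. p (x + z))"
    and "measure (density lborel p) (ball x r) = (\<integral>z. indicator (ball 0 r) z * p (x + z) \<partial>lborel)"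
    and "smooth_dens r p x = (1 / vol_ball TYPE('a) r) * (\<integral>z. indicator (ball 0 r) z * p (x + z) \<partial>lborel)"
proof -
  show "(\<lambda>z. p (x + z)) \<in> borel_measurable borel" by measurable
  have "integrable (distr lborel borel ((+) x)) p" using pi by (simp add: lborel_distr_plus)
  moreover have "integrable (distr lborel borel ((+) x)) p \<longleftrightarrow> integrable lborel (\<lambda>z. p (x + z))"
    by (rule integrable_distr_eq[of "(+) x" lborel borel p]; measurable)
  ultimately show "integrable lborel (\<lambda>z. p (x + z))" by blast
  show "measure (density lborel p) (ball x r) = (\<integral>z. indicator (ball 0 r) z * p (x + z) \<partial>lborel)"
  proof -
    have b: "ball x r \<in> sets borel" by simp
    show ?thesis by (rule trans[OF density_measure_eq[OF assms(1) assms(3) pi b] translate_int[OF assms(1)]])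
  qed
  show "smooth_dens r p x = (1 / vol_ball TYPE('a) r) * (\<integral>z. indicator (ball 0 r) z * p (x + z) \<partial>lborel)"
    by (simp add: smooth_dens_def set_lebesgue_integral_def)
qed

theorem theorem2:
  fixes p q :: "'a::euclidean_space \<Rightarrow> real" and L \<epsilon> lam :: real and x :: 'a
  assumes p_meas: "p \<in> borel_measurable borel" and q_meas: "q \<in> borel_measurable borel"
    and p_nonneg: "\<And>y. p y \<ge> 0" and q_nonneg: "\<And>y. q y \<ge> 0"
    and p_int: "integrable lborel p" and q_int: "integrable lborel q"
    and p_one: "(\<integral>y. p y \<partial>lborel) = 1" and q_one: "(\<integral>y. q y \<partial>lborel) = 1"
    and p_mom: "integrable lborel (\<lambda>y. (norm y)\<^sup>2 * p y)"
    and q_mom: "integrable lborel (\<lambda>y. (norm y)\<^sup>2 * q y)"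
    and p_lip: "L-lipschitz_on UNIV p" and q_lip: "L-lipschitz_on UNIV q"
    and eps: "\<epsilon> > 0" and lam_gt: "lam > \<epsilon>"
    and W: "W2 (density lborel p) (density lborel q) < \<epsilon>\<^sup>2"
  shows "smooth_dens lam p x \<le>
      vol_ball TYPE('a) lam / vol_ball TYPE('a) (lam - \<epsilon>) * smooth_dens lam q x
      + (vol_ball TYPE('a) lam / vol_ball TYPE('a) (lam - \<epsilon>) - 1) * (2 * lam * L)
      + \<epsilon> / vol_ball TYPE('a) (lam - \<epsilon>)"
proof -
  define V where "V = vol_ball TYPE('a) lam"
  define V' where "V' = vol_ball TYPE('a) (lam - \<epsilon>)"
  define Ip where "Ip = (\<integral>z. indicator (ball 0 lam) z * p (x + z) \<partial>lborel)"
  define Ip' where "Ip' = (\<integral>z. indicator (ball 0 (lam - \<epsilon>)) z * p (x + z) \<partial>lborel)"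
  define Jq where "Jq = (\<integral>z. indicator (ball 0 lam) z * q (x + z) \<partial>lborel)"
  note pf = shift_facts[OF p_meas p_int p_nonneg, where x=x]
  note qf = shift_facts[OF q_meas q_int q_nonneg, where x=x]
  have L: "L \<ge> 0" using p_lip by (simp add: lipschitz_on_def)
  have lip: "\<bar>p (x + z) - p (x + 0)\<bar> \<le> L * norm z" for z
  proof -
    have "dist (p (x + z)) (p (x + 0)) \<le> L * dist (x + z) (x + 0)"
      using p_lip unfolding lipschitz_on_def by blast
    then show ?thesis by (simp add: dist_real_def dist_norm)
  qed
  have V'pos: "V' > 0" unfolding V'_def vol_ball_def using lam_gt by simp
  have Vpos: "V > 0" unfolding V_def vol_ball_def using lam_gt eps by simp
  have an: "V' * Ip \<le> V * Ip' + V * (V - V') * (2 * lam * L)"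
    unfolding V_def V'_def Ip_def Ip'_def
    using analytic[of "\<lambda>z. p (x + z)" L "lam - \<epsilon>" lam] pf(1,2) lip L lam_gt eps by simp
  have cb: "Ip' \<le> Jq + \<epsilon>"
  proof -
    have "measure (density lborel p) (ball x (lam - \<epsilon>)) \<le> measure (density lborel q) (ball x lam) + \<epsilon>"
    proof (rule coupling_bound[OF p_meas q_meas p_nonneg q_nonneg p_int q_int p_one q_one p_mom q_mom eps W])
      fix y z assume a: "y \<in> ball x (lam - \<epsilon>)" "norm (y - z) < \<epsilon>"
      have "dist x z \<le> dist x y + dist y z" by (rule dist_triangle)
      moreover have "dist y z = norm (y - z)" by (rule dist_norm)
      moreover have "dist x y < lam - \<epsilon>" using a(1) by simp
      ultimately show "z \<in> ball x lam" using a(2) by simp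
    qed auto
    then show ?thesis using pf(3) qf(3) unfolding Ip'_def Jq_def by simp
  qed
  have "V' * Ip \<le> V * (Jq + \<epsilon>) + V * (V - V') * (2 * lam * L)"
    using an mult_left_mono[OF cb, of V] Vpos by linarith
  then have "Ip / V \<le> (Jq + (V - V') * (2 * lam * L) + \<epsilon>) / V'"
    using Vpos V'pos by (simp add: divide_simps algebra_simps)
  moreover have "(Jq + (V - V') * (2 * lam * L) + \<epsilon>) / V' =
      V / V' * (1 / V * Jq) + (V / V' - 1) * (2 * lam * L) + \<epsilon> / V'"
    using Vpos V'pos by (simp add: field_simps)
  ultimately show ?thesis using pf(4)[of lam] qf(4)[of lam]
    unfolding V_def V'_def Ip_def Jq_def by simp
qed


end
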